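(* Let $K\in\{\mathbb R,\mathbb C,\mathbb H\}$ and let $(E,d)$ be a metric vector space over $K$ such that $d$ is asymptotically multiplicative, unbounded on every non-trivial linear subspace, and such that for every $C_1>1$ there exists $C_0\ge0$ with $d\big(\sum_{i=1}^n x_i,\sum_{i=1}^n y_i\big)\le C_1\sum_{i=1}^n d(x_i,y_i)+nC_0$ for all $n\ge2$ and $x_1,\dots,x_n,y_1,\dots,y_n\in E$. Let $d_0(x,y)=\int_{\mathbb U}d(ux,uy)\,d\mu(u)$. Then for all $x,y\in E$ the limit $\lim_{n\to+\infty}\frac1n d_0(nx,ny)$ exists.
   Context: A metric vector space is a topological vector space over $K$ whose topology is generated by the metric $d$. $\mathbb U=\{u\in K:|u|=1\}$, $\mu$ the right-invariant Haar probability measure on $\mathbb U$. $d$ is asymptotically multiplicative if for every $C_1>1$ there exist $C_2,C_3\ge0$ with $C_1^{-1}|\lambda|d(x,y)-C_2|\lambda|-C_3\le d(\lambda x,\lambda y)\le C_1|\lambda|d(x,y)+C_2|\lambda|+C_3$ for all $\lambda\in K$, $x,y\in E$. *)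

theory Defs
  imports "HOL-Probability.Probability"
begin

text \<open>The scalar field K is modelled by a type of class real_normed_div_algebra
  (an associative real division algebra with multiplicative norm); up to isomorphism
  these are exactly R, C and H.\<close>

definition left_vector_space :: "('k::real_normed_div_algebra \<Rightarrow> 'e::ab_group_add \<Rightarrow> 'e) \<Rightarrow> bool" where
  "left_vector_space sc \<longleftrightarrow>
     (\<forall>a x y. sc a (x + y) = sc a x + sc a y) \<and>
     (\<forall>a b x. sc (a + b) x = sc a x + sc b x) \<and>
     (\<forall>a b x. sc (a * b) x = sc a (sc b x)) \<and>
     (\<forall>x. sc 1 x = x)"

definition is_metric :: "('e \<Rightarrow> 'e \<Rightarrow> real) \<Rightarrow> bool" where
  "is_metric d \<longleftrightarrow>
     (\<forall>x y. d x y = 0 \<longleftrightarrow> x = y) \<and>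
     (\<forall>x y. d x y = d y x) \<and>
     (\<forall>x y z. d x z \<le> d x y + d y z)"

definition metric_vector_space ::
  "('k::real_normed_div_algebra \<Rightarrow> 'e::ab_group_add \<Rightarrow> 'e) \<Rightarrow> ('e \<Rightarrow> 'e \<Rightarrow> real) \<Rightarrow> bool" where
  "metric_vector_space sc d \<longleftrightarrow>
     left_vector_space sc \<and> is_metric d \<and>
     (\<forall>x y. \<forall>\<epsilon>>0. \<exists>\<delta>>0. \<forall>x' y'. d x x' < \<delta> \<and> d y y' < \<delta> \<longrightarrow> d (x + y) (x' + y') < \<epsilon>) \<and>
     (\<forall>a x. \<forall>\<epsilon>>0. \<exists>\<delta>>0. \<forall>a' x'. norm (a - a') < \<delta> \<and> d x x' < \<delta> \<longrightarrow> d (sc a x) (sc a' x') < \<epsilon>)"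

definition asymptotically_multiplicative ::
  "('k::real_normed_div_algebra \<Rightarrow> 'e \<Rightarrow> 'e) \<Rightarrow> ('e \<Rightarrow> 'e \<Rightarrow> real) \<Rightarrow> bool" where
  "asymptotically_multiplicative sc d \<longleftrightarrow>
     (\<forall>C1>1. \<exists>C2\<ge>0. \<exists>C3\<ge>0. \<forall>c x y.
        inverse C1 * norm c * d x y - C2 * norm c - C3 \<le> d (sc c x) (sc c y) \<and>
        d (sc c x) (sc c y) \<le> C1 * norm c * d x y + C2 * norm c + C3)"

definition linear_subspace ::
  "('k::real_normed_div_algebra \<Rightarrow> 'e::ab_group_add \<Rightarrow> 'e) \<Rightarrow> 'e set \<Rightarrow> bool" where
  "linear_subspace sc V \<longleftrightarrow>
     0 \<in> V \<and> (\<forall>x\<in>V. \<forall>y\<in>V. x + y \<in> V) \<and> (\<forall>a. \<forall>x\<in>V. sc a x \<in> V)"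

definition unbounded_on_subspaces ::
  "('k::real_normed_div_algebra \<Rightarrow> 'e::ab_group_add \<Rightarrow> 'e) \<Rightarrow> ('e \<Rightarrow> 'e \<Rightarrow> real) \<Rightarrow> bool" where
  "unbounded_on_subspaces sc d \<longleftrightarrow>
     (\<forall>V. linear_subspace sc V \<and> V \<noteq> {0} \<longrightarrow> \<not> (\<exists>M. \<forall>x\<in>V. \<forall>y\<in>V. d x y \<le> M))"

definition unit_sphere :: "'k::real_normed_div_algebra set" where
  "unit_sphere = {u. norm u = 1}"

definition right_haar_prob :: "'k::real_normed_div_algebra measure \<Rightarrow> bool" where
  "right_haar_prob \<mu> \<longleftrightarrow>
     prob_space \<mu> \<and> space \<mu> = unit_sphere \<and>
     sets \<mu> = sets (restrict_space borel unit_sphere) \<and>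
     (\<forall>u\<in>unit_sphere. distr \<mu> \<mu> (\<lambda>v. v * u) = \<mu>)"

definition d0 ::
  "('k::real_normed_div_algebra \<Rightarrow> 'e \<Rightarrow> 'e) \<Rightarrow> ('e \<Rightarrow> 'e \<Rightarrow> real) \<Rightarrow> 'k measure \<Rightarrow> 'e \<Rightarrow> 'e \<Rightarrow> real" where
  "d0 sc d \<mu> x y = (\<integral>u. d (sc u x) (sc u y) \<partial>\<mu>)"

end

theory Submission
  imports Defs
begin
lemma conv_lemma:
  fixes a :: "nat \<Rightarrow> real"
  assumes nonneg: "\<And>n. 0 \<le> a n" and A: "0 \<le> A" and B: "0 \<le> B"
    and bnd: "\<And>n. a n \<le> A * real n + B"
    and sub: "\<And>C1. C1 > 1 \<Longrightarrow> \<exists>C0\<ge>0. \<forall>k m r. k \<ge> 1 \<longrightarrow>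
                a (k*m+r) \<le> C1 * (real k * a m + a r) + real (k+1) * C0"
  shows "convergent (\<lambda>n. a n / real n)"
proof -
  define b where "b n = a n / real n" for n
  have b0: "0 \<le> b n" for n unfolding b_def using nonneg by simp
  have bM: "b n \<le> A + B" for n
  proof (cases "n = 0")
    case True then show ?thesis using A B by (simp add: b_def)
  next
    case False
    then have n1: "real n \<ge> 1" by simp
    have "b n \<le> (A * real n + B) / real n" unfolding b_def using bnd[of n] n1
      by (simp add: divide_right_mono)
    also have "\<dots> = A + B / real n" using n1 by (simp add: field_simps)
    also have "\<dots> \<le> A + B" using n1 B mult_left_mono[of 1 "real n" B] by (simp add: divide_le_eq)
    finally show ?thesis .
  qed
  have claim: "\<exists>m0. \<forall>m\<ge>m0. \<exists>N. \<forall>n\<ge>N. b n \<le> b m + \<eta>" if eta: "\<eta> > 0" for \<eta>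
  proof -
    define \<delta> where "\<delta> = \<eta> / (3*(A+B+1))"
    have dpos: "\<delta> > 0" unfolding \<delta>_def using eta A B by simp
    have dM: "\<delta> * (A+B) \<le> \<eta>/3"
    proof -
      have "\<delta> * (A+B) \<le> \<delta> * (A+B+1)" using dpos by simp
      also have "\<dots> = \<eta>/3"
      proof -
        have "A+B+1 \<noteq> 0" using A B by simp
        moreover have "\<eta> / (3*X) * X = \<eta>/3" if "X \<noteq> 0" for X::real using that by simp
        ultimately show ?thesis unfolding \<delta>_def by blast
      qed
      finally show ?thesis .
    qed
    obtain C0 where C0: "C0 \<ge> 0" and C0ineq: "\<And>k m r. k\<ge>1 \<Longrightarrow>
        a (k*m+r) \<le> (1+\<delta>) * (real k * a m + a r) + real (k+1) * C0"
      using sub[of "1+\<delta>"] dpos by auto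
    obtain n0 :: nat where n0: "3*C0/\<eta> \<le> real n0" using real_arch_simple by blast
    define m0 where "m0 = Suc n0"
    have m0C: "C0 / real m \<le> \<eta>/3" if "m \<ge> m0" for m
    proof -
      have "3*C0 \<le> \<eta> * real n0" using n0 eta by (simp add: divide_le_eq mult.commute)
      also have "\<dots> \<le> \<eta> * real m" using that eta unfolding m0_def by simp
      finally show ?thesis using that unfolding m0_def by (simp add: divide_le_eq)
    qed
    show ?thesis
    proof (rule exI[of _ m0], intro allI impI)
      fix m assume mm0: "m0 \<le> m"
      have m1: "m \<ge> 1" using mm0 unfolding m0_def by simp
      define K where "K = (1+\<delta>)*(A*real m+B) + C0"
      obtain N0 :: nat where N0: "3*K/\<eta> \<le> real N0" using real_arch_simple by blast
      show "\<exists>N. \<forall>n\<ge>N. b n \<le> b m + \<eta>"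
      proof (rule exI[of _ "max m (max N0 1)"], intro allI impI)
        fix n assume nN: "max m (max N0 1) \<le> n"
        define k where "k = n div m"
        define r where "r = n mod m"
        have nkr: "n = k*m + r" unfolding k_def r_def by simp
        have k1: "k \<ge> 1" unfolding k_def using nN m1
          by (simp add: div_greater_zero_iff Suc_le_eq)
        have rm: "r < m" unfolding r_def using m1 by simp
        have npos: "real n > 0" using nN by simp
        have kmn: "real k * real m \<le> real n" using nkr
          by (metis le_add1 of_nat_le_iff of_nat_mult)
        have main: "a n \<le> (1+\<delta>) * (real k * a m + a r) + real (k+1) * C0"
          using C0ineq[OF k1, of m r] nkr by simp
        have t1: "(1+\<delta>) * (real k * a m) / real n \<le> b m + \<eta>/3"
        proof -
          have kk: "real k * a m / real n \<le> a m / real m"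
            using kmn nonneg[of m] npos m1
          proof -
            have mp: "0 < real m" using m1 by simp
            have "real k * a m * real m \<le> a m * real n"
              using mult_left_mono[OF kmn nonneg[of m]] by (simp add: algebra_simps)
            then show ?thesis using mp npos by (simp add: field_simps)
          qed
          then have "(1+\<delta>) * (real k * a m) / real n \<le> (1+\<delta>) * b m"
            unfolding b_def using dpos mult_left_mono[OF kk, of "1+\<delta>"] by simp
          also have "\<dots> = b m + \<delta> * b m" by (simp add: algebra_simps)
          also have "\<dots> \<le> b m + \<delta> * (A+B)" using bM[of m] dpos by simp
          finally show ?thesis using dM by simp
        qed
        have t2: "real k * C0 / real n \<le> \<eta>/3"
        proof -
          have "real k * C0 / real n \<le> C0 / real m"
            using kmn C0 npos m1
          proof -
            have mp: "0 < real m" using m1 by simp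
            have "real k * C0 * real m \<le> C0 * real n"
              using mult_left_mono[OF kmn C0] by (simp add: algebra_simps)
            then show ?thesis using mp npos by (simp add: field_simps)
          qed
          then show ?thesis using m0C[OF mm0] by linarith
        qed
        have t3: "((1+\<delta>) * a r + C0) / real n \<le> \<eta>/3"
        proof -
          have "a r \<le> A * real m + B" using bnd[of r] rm A
          proof -
            have "A * real r \<le> A * real m" using rm A by (intro mult_left_mono) auto
            then show ?thesis using bnd[of r] by linarith
          qed
          then have "(1+\<delta>) * a r + C0 \<le> K" unfolding K_def using dpos by simp
          also have "\<dots> \<le> \<eta>/3 * real n"
          proof -
            have "3*K \<le> \<eta> * real N0" using N0 eta by (simp add: divide_le_eq mult.commute)
            also have "\<dots> \<le> \<eta> * real n" using nN eta by simp
            finally show ?thesis by simp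
          qed
          finally show ?thesis using npos by (simp add: divide_le_eq)
        qed
        have "b n \<le> ((1+\<delta>) * (real k * a m + a r) + real (k+1) * C0) / real n"
          unfolding b_def using main npos by (simp add: divide_right_mono)
        also have "\<dots> = (1+\<delta>) * (real k * a m) / real n + real k * C0 / real n
                        + ((1+\<delta>) * a r + C0) / real n"
          unfolding add_divide_distrib[symmetric] by (simp add: algebra_simps)
        also have "\<dots> \<le> b m + \<eta>" using t1 t2 t3 by linarith
        finally show "b n \<le> b m + \<eta>" .
      qed
    qed
  qed
  define f where "f n = ereal (b n)" for n
  have supub: "Limsup sequentially f \<le> ereal (A+B)"
    by (rule Limsup_bounded) (simp add: f_def bM)
  have inflb: "ereal 0 \<le> Liminf sequentially f"
    by (rule Liminf_bounded) (simp add: f_def b0)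
  have le: "Liminf sequentially f \<le> Limsup sequentially f"
    by (rule Liminf_le_Limsup) simp
  obtain s where s: "Limsup sequentially f = ereal s"
    using supub inflb le by (cases "Limsup sequentially f") auto
  obtain i where i: "Liminf sequentially f = ereal i"
    using supub inflb le by (cases "Liminf sequentially f") auto
  have "s \<le> i + \<eta>" if eta: "\<eta> > 0" for \<eta>
  proof -
    obtain m0 where m0: "\<And>m. m \<ge> m0 \<Longrightarrow> \<exists>N. \<forall>n\<ge>N. b n \<le> b m + \<eta>"
      using claim[OF eta] by blast
    have sb: "s \<le> b m + \<eta>" if mm: "m \<ge> m0" for m
    proof -
      obtain N where N: "\<And>n. n \<ge> N \<Longrightarrow> b n \<le> b m + \<eta>" using m0[OF mm] by blast
      have "Limsup sequentially f \<le> ereal (b m + \<eta>)"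
        by (rule Limsup_bounded) (auto simp: f_def intro!: eventually_sequentiallyI N)
      then show ?thesis using s by simp
    qed
    have fm: "ereal (s - \<eta>) \<le> f m" if "m \<ge> m0" for m using sb[OF that] by (simp add: f_def)
    have "ereal (s - \<eta>) \<le> Liminf sequentially f"
      by (intro Liminf_bounded eventually_sequentiallyI[of m0] fm)

    then show ?thesis using i by simp
  qed
  then have "s \<le> i" by (rule field_le_epsilon)
  then have "s = i" using le s i by simp
  then have "(f \<longlongrightarrow> ereal i) sequentially"
    by (intro Liminf_eq_Limsup) (auto simp: s i)
  then have "(b \<longlongrightarrow> i) sequentially" unfolding f_def by simp
  then show ?thesis unfolding b_def convergent_def by blast
qed

lemma lvs_sc_zero:
  assumes "left_vector_space sc" shows "sc a 0 = 0"
proof -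
  have "sc a (0+0) = sc a 0 + sc a 0" using assms unfolding left_vector_space_def by blast
  then show ?thesis by simp
qed

lemma lvs_sc_sum:
  assumes "left_vector_space sc" shows "sc a (sum f S) = (\<Sum>i\<in>S. sc a (f i))"
proof (cases "finite S")
  case True then show ?thesis
    by (induction S rule: finite_induct)
      (auto simp: lvs_sc_zero[OF assms] assms[unfolded left_vector_space_def])
next
  case False then show ?thesis by (simp add: lvs_sc_zero[OF assms])
qed

lemma lvs_nat_mult:
  assumes "left_vector_space sc"
  shows "sc (of_nat (k*m)) z = (\<Sum>i=1..k. sc (of_nat m) z)"
proof (induction k)
  case 0
  have "sc (0 + 0) z = sc 0 z + sc 0 z" using assms unfolding left_vector_space_def by blast
  then show ?case by simp
next
  case (Suc k)
  have "sc (of_nat (Suc k * m)) z = sc (of_nat (k*m) + of_nat m) z" by (simp add: add.commute)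
  also have "\<dots> = sc (of_nat (k*m)) z + sc (of_nat m) z"
    using assms unfolding left_vector_space_def by blast
  finally show ?case using Suc by simp
qed

lemma pointwise_ineq:
  fixes sc :: "'k::real_normed_div_algebra \<Rightarrow> 'e::ab_group_add \<Rightarrow> 'e"
  assumes lvs: "left_vector_space sc"
    and H: "\<forall>n\<ge>2. \<forall>x y :: nat \<Rightarrow> 'e.
           d (\<Sum>i=1..n. x i) (\<Sum>i=1..n. y i) \<le> C1 * (\<Sum>i=1..n. d (x i) (y i)) + real n * C0"
    and k1: "k \<ge> 1"
  shows "d (sc u (sc (of_nat (k*m+r)) x)) (sc u (sc (of_nat (k*m+r)) y))
    \<le> C1 * (real k * d (sc u (sc (of_nat m) x)) (sc u (sc (of_nat m) y))
             + d (sc u (sc (of_nat r) x)) (sc u (sc (of_nat r) y))) + real (k+1) * C0"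
proof -
  have decomp: "sc u (sc (of_nat (k*m+r)) z) =
     (\<Sum>i=1..Suc k. if i \<le> k then sc u (sc (of_nat m) z) else sc u (sc (of_nat r) z))" for z
  proof -
    have "sc (of_nat (k*m+r)) z = sc (of_nat (k*m) + of_nat r) z" by simp
    also have "\<dots> = sc (of_nat (k*m)) z + sc (of_nat r) z"
      using lvs unfolding left_vector_space_def by blast
    finally have "sc u (sc (of_nat (k*m+r)) z) = sc u (sc (of_nat (k*m)) z) + sc u (sc (of_nat r) z)"
      using lvs unfolding left_vector_space_def by simp
    also have "\<dots> = (\<Sum>i=1..k. sc u (sc (of_nat m) z)) + sc u (sc (of_nat r) z)"
      by (simp only: lvs_nat_mult[OF lvs] lvs_sc_sum[OF lvs])
    also have "(\<Sum>i=1..k. sc u (sc (of_nat m) z)) =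
        (\<Sum>i=1..k. if i \<le> k then sc u (sc (of_nat m) z) else sc u (sc (of_nat r) z))"
      by (rule sum.cong) auto
    finally show ?thesis by simp
  qed
  define Dm where "Dm = d (sc u (sc (of_nat m) x)) (sc u (sc (of_nat m) y))"
  define Dr where "Dr = d (sc u (sc (of_nat r) x)) (sc u (sc (of_nat r) y))"
  define XX where "XX i = (if i \<le> k then sc u (sc (of_nat m) x) else sc u (sc (of_nat r) x))" for i
  define YY where "YY i = (if i \<le> k then sc u (sc (of_nat m) y) else sc u (sc (of_nat r) y))" for i
  have dsum: "(\<Sum>i=1..Suc k. d (XX i) (YY i)) = real k * Dm + Dr"
  proof -
    have "(\<Sum>i=1..k. d (XX i) (YY i)) = (\<Sum>i=1..k. Dm)"
      unfolding Dm_def XX_def YY_def by (rule sum.cong) auto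
    then show ?thesis unfolding Dr_def by (simp add: XX_def YY_def)
  qed
  have "Suc k \<ge> 2" using k1 by simp
  then have ineq: "d (\<Sum>i=1..Suc k. XX i) (\<Sum>i=1..Suc k. YY i)
      \<le> C1 * (\<Sum>i=1..Suc k. d (XX i) (YY i)) + real (Suc k) * C0"
    using H by blast
  have ex: "(\<Sum>i=1..Suc k. XX i) = sc u (sc (of_nat (k*m+r)) x)"
    unfolding XX_def by (rule decomp[symmetric])
  have ey: "(\<Sum>i=1..Suc k. YY i) = sc u (sc (of_nat (k*m+r)) y)"
    unfolding YY_def by (rule decomp[symmetric])
  show ?thesis using ineq unfolding ex ey dsum Dm_def Dr_def by simp
qed

lemma d_cont_on:
  fixes sc :: "'k::real_normed_div_algebra \<Rightarrow> 'e::ab_group_add \<Rightarrow> 'e"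
  assumes mvs: "metric_vector_space sc d"
  shows "continuous_on UNIV (\<lambda>u. d (sc u p) (sc u q))"
proof -
  have met: "is_metric d" using mvs unfolding metric_vector_space_def by blast
  have sym: "d a b = d b a" for a b using met unfolding is_metric_def by blast
  have tri: "d a c \<le> d a b + d b c" for a b c using met unfolding is_metric_def by blast
  have self: "d a a = 0" for a using met unfolding is_metric_def by simp
  have sccont: "\<exists>\<delta>>0. \<forall>a'. norm (a - a') < \<delta> \<longrightarrow> d (sc a z) (sc a' z) < \<epsilon>"
    if eps: "\<epsilon> > 0" for a z \<epsilon>
  proof -
    obtain \<delta> where "\<delta> > 0" and H: "\<forall>a' x'. norm (a - a') < \<delta> \<and> d z x' < \<delta> \<longrightarrow> d (sc a z) (sc a' x') < \<epsilon>"
      using mvs eps unfolding metric_vector_space_def by meson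
    then show ?thesis using self[of z] by auto
  qed
  show ?thesis unfolding continuous_on_iff
  proof (intro ballI allI impI)
    fix u :: 'k and e :: real assume "e > 0"
    then have e2: "e/2 > 0" by simp
    obtain \<delta>1 where d1: "\<delta>1 > 0" "\<forall>a'. norm (u - a') < \<delta>1 \<longrightarrow> d (sc u p) (sc a' p) < e/2"
      using sccont[OF e2] by blast
    obtain \<delta>2 where d2: "\<delta>2 > 0" "\<forall>a'. norm (u - a') < \<delta>2 \<longrightarrow> d (sc u q) (sc a' q) < e/2"
      using sccont[OF e2] by blast
    show "\<exists>\<delta>>0. \<forall>x'\<in>UNIV. dist x' u < \<delta> \<longrightarrow> dist (d (sc x' p) (sc x' q)) (d (sc u p) (sc u q)) < e"
    proof (rule exI[of _ "min \<delta>1 \<delta>2"], intro conjI ballI impI)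
      show "min \<delta>1 \<delta>2 > 0" using d1 d2 by simp
      fix v :: 'k assume "v \<in> UNIV" "dist v u < min \<delta>1 \<delta>2"
      then have "norm (u - v) < \<delta>1" "norm (u - v) < \<delta>2"
        by (simp_all add: dist_norm norm_minus_commute)
      then have A: "d (sc u p) (sc v p) < e/2" and B: "d (sc u q) (sc v q) < e/2"
        using d1 d2 by auto
      have "d (sc v p) (sc v q) \<le> d (sc v p) (sc u p) + d (sc u p) (sc u q) + d (sc u q) (sc v q)"
        using tri[of "sc v p" "sc v q" "sc u p"] tri[of "sc u p" "sc v q" "sc u q"] by linarith
      moreover have "d (sc u p) (sc u q) \<le> d (sc u p) (sc v p) + d (sc v p) (sc v q) + d (sc v q) (sc u q)"
        using tri[of "sc u p" "sc u q" "sc v p"] tri[of "sc v p" "sc u q" "sc v q"] by linarith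
      ultimately show "dist (d (sc v p) (sc v q)) (d (sc u p) (sc u q)) < e"
        using A B sym[of "sc u p" "sc v p"] sym[of "sc u q" "sc v q"]
        unfolding dist_real_def by linarith
    qed
  qed
qed

theorem proposition8:
  fixes sc :: "'k::real_normed_div_algebra \<Rightarrow> 'e::ab_group_add \<Rightarrow> 'e"
    and d :: "'e \<Rightarrow> 'e \<Rightarrow> real"
    and \<mu> :: "'k measure"
  assumes "metric_vector_space sc d"
    and "asymptotically_multiplicative sc d"
    and "unbounded_on_subspaces sc d"
    and "\<forall>C1>1. \<exists>C0\<ge>0. \<forall>n\<ge>2. \<forall>x y :: nat \<Rightarrow> 'e.
           d (\<Sum>i=1..n. x i) (\<Sum>i=1..n. y i) \<le> C1 * (\<Sum>i=1..n. d (x i) (y i)) + real n * C0"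
    and "right_haar_prob \<mu>"
  shows "\<forall>x y. convergent (\<lambda>n::nat. d0 sc d \<mu> (sc (of_nat n) x) (sc (of_nat n) y) / real n)"
proof (intro allI)
  fix x y :: 'e
  note mvs = assms(1)
  have lvs: "left_vector_space sc" and met: "is_metric d"
    using mvs unfolding metric_vector_space_def by blast+
  have dnn: "0 \<le> d a b" for a b
  proof -
    have "d a a \<le> d a b + d b a" "d a a = 0" "d a b = d b a"
      using met unfolding is_metric_def by blast+
    then show ?thesis by linarith
  qed
  have ps: "prob_space \<mu>" and sp: "space \<mu> = unit_sphere"
    and sets: "sets \<mu> = sets (restrict_space borel unit_sphere)"
    using assms(5) unfolding right_haar_prob_def by blast+
  interpret prob_space \<mu> by (rule ps)
  have two: "(2::real) > 1" by simp
  obtain C2 C3 where C2: "C2 \<ge> 0" and C3: "C3 \<ge> 0" and amb: "\<forall>c p q.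
      inverse 2 * norm c * d p q - C2 * norm c - C3 \<le> d (sc c p) (sc c q) \<and>
      d (sc c p) (sc c q) \<le> 2 * norm c * d p q + C2 * norm c + C3"
    using assms(2)[unfolded asymptotically_multiplicative_def, rule_format, OF two] by blast
  have am: "d (sc c p) (sc c q) \<le> 2 * norm c * d p q + C2 * norm c + C3" for c p q
    using amb by blast
  define g where "g n u = d (sc u (sc (of_nat n) x)) (sc u (sc (of_nat n) y))" for n u
  define a where "a n = integral\<^sup>L \<mu> (g n)" for n
  define A where "A = 2 * d x y + C2"
  have A0: "A \<ge> 0" unfolding A_def using dnn[of x y] C2 by simp
  have gbnd: "g n u \<le> A * real n + C3" if "u \<in> space \<mu>" for n u
  proof -
    have nu: "norm u = 1" using that sp unfolding unit_sphere_def by simp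
    have "g n u = d (sc (u * of_nat n) x) (sc (u * of_nat n) y)"
      unfolding g_def using lvs unfolding left_vector_space_def by simp
    also have "\<dots> \<le> 2 * norm (u * of_nat n) * d x y + C2 * norm (u * of_nat n) + C3" by (rule am)
    also have "norm (u * (of_nat n :: 'k)) = real n" using nu by (simp add: norm_mult)
    finally show ?thesis unfolding A_def by (simp add: algebra_simps)
  qed
  have gmeas: "g n \<in> borel_measurable \<mu>" for n
  proof -
    have "g n \<in> borel_measurable borel"
      unfolding g_def by (intro borel_measurable_continuous_onI d_cont_on[OF mvs])
    then have "g n \<in> borel_measurable (restrict_space borel unit_sphere)"
      by (rule measurable_restrict_space1)
    then show ?thesis using measurable_cong_sets[OF sets refl] by blast
  qed
  have gint: "integrable \<mu> (g n)" for n
    by (rule integrable_const_bound[where B="A * real n + C3"])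
       (auto intro!: AE_I2 gmeas simp: g_def dnn gbnd[unfolded g_def])
  have a0: "0 \<le> a n" for n unfolding a_def by (rule Bochner_Integration.integral_nonneg) (simp add: g_def dnn)
  have abnd: "a n \<le> A * real n + C3" for n
  proof -
    have "a n \<le> integral\<^sup>L \<mu> (\<lambda>u. A * real n + C3)"
      unfolding a_def by (rule integral_mono[OF gint]) (auto intro: gbnd)
    then show ?thesis by (simp add: prob_space)
  qed
  have sub: "\<exists>C0\<ge>0. \<forall>k m r. k \<ge> 1 \<longrightarrow> a (k*m+r) \<le> C1 * (real k * a m + a r) + real (k+1) * C0"
    if C1gt: "C1 > 1" for C1
  proof -
    obtain C0 where C0: "C0 \<ge> 0" and H: "\<forall>n\<ge>2. \<forall>x y :: nat \<Rightarrow> 'e.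
           d (\<Sum>i=1..n. x i) (\<Sum>i=1..n. y i) \<le> C1 * (\<Sum>i=1..n. d (x i) (y i)) + real n * C0"
      using assms(4) C1gt by blast
    show ?thesis
    proof (intro exI[of _ C0] conjI allI impI)
      show "C0 \<ge> 0" by (rule C0)
      fix k m r :: nat assume k1: "k \<ge> 1"
      have iR: "integrable \<mu> (\<lambda>u. C1 * (real k * g m u + g r u) + real (k+1) * C0)"
        using gint by simp
      have pw: "g (k*m+r) u \<le> C1 * (real k * g m u + g r u) + real (k+1) * C0" for u
        unfolding g_def by (rule pointwise_ineq[OF lvs H k1])
      have "a (k*m+r) \<le> integral\<^sup>L \<mu> (\<lambda>u. C1 * (real k * g m u + g r u) + real (k+1) * C0)"
        unfolding a_def by (rule integral_mono[OF gint iR pw])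
      also have "\<dots> = C1 * (real k * a m + a r) + real (k+1) * C0"
        unfolding a_def using gint by (simp add: prob_space)
      finally show "a (k*m+r) \<le> C1 * (real k * a m + a r) + real (k+1) * C0" .
    qed
  qed
  have "convergent (\<lambda>n. a n / real n)"
    by (rule conv_lemma[OF a0 A0 C3 abnd sub])
  then show "convergent (\<lambda>n::nat. d0 sc d \<mu> (sc (of_nat n) x) (sc (of_nat n) y) / real n)"
    unfolding a_def g_def d0_def .
qed

end
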